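(* Let $R=DV$ be any decomposition of the boundary matrix of the cone filtration, and let $\sigma\in K$ and $\omega*\tau$ ($\tau\in K$) form a persistence pair, $\operatorname{low}R[\omega*\tau]=\sigma$, with $d=\min\sigma>b=\max\tau$. Let $c=V[\omega*\tau]\cap(\omega*K\setminus K)+V[\omega*\tau]\cap K_{\ge b}$ (the part of $V[\omega*\tau]$ on cone simplices and $\omega$, plus the part on base simplices in $K_{\ge b}$), and let $z=\partial c$. Then $z$ is a cycle supported in $K[b,d]=K_{\ge b}\cap K_{\le d}$ (so $[z]\in H(K[b,d])$), and $\sigma\in z$ and $\tau\in z$.
   Context: Coefficients are in a field $\mathbb F$. Let $K$ be a finite $\Delta$-complex in which every simplex $\sigma$ carries an integer interval $T(\sigma)=[\min\sigma,\max\sigma]$ with $\min\sigma<\max\sigma$, such that whenever $\sigma$ is a proper face of $\tau$, $\min\sigma<\min\tau<\max\tau<\max\sigma$; assume the values $\min\sigma$ ($\sigma\in K$) are pairwise distinct and the values $\max\sigma$ are pairwise distinct. Write $K_{\le i}=\{\sigma:\min\sigma\le i\}$, $K_{\ge j}=\{\sigma:\max\sigma\ge j\}$ (subcomplexes), and $K[b,d]=K_{\ge b}\cap K_{\le d}$. The cone $\omega*K$ consists of the simplices of $K$ ("base simplices"), a new vertex $\omega$, and simplices $\omega*\sigma$ for $\sigma\in K$ ("cone simplices"), with $\partial(\omega*\sigma)=\sigma-\omega*\partial\sigma$ (for a vertex $v$, $\partial(\omega*v)=v-\omega$). The cone filtration orders base simplices by increasing $\min$, then $\omega$, then the simplices $\omega*\sigma$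 by decreasing $\max\sigma$. $D$ is the boundary matrix of $\omega*K$ with rows and columns in this order; $R=DV$ denotes a decomposition with $V$ invertible upper-triangular and $R$ reduced (pivots $\operatorname{low}$ — lowest nonzero entries — of nonzero columns in distinct rows). "$\sigma\in c$" means the coefficient of $\sigma$ in chain $c$ is nonzero; $c\cap L$ is the restriction of chain $c$ to simplices in $L$; a chain is supported in $L$ if all its nonzero coefficients are on simplices of $L$. *)

theory Defs
  imports Main "HOL-Library.Product_Lexorder"
begin

definition delta_complex :: "'a set \<Rightarrow> ('a \<Rightarrow> nat) \<Rightarrow> ('a \<Rightarrow> nat \<Rightarrow> 'a) \<Rightarrow> bool" where
  "delta_complex K dim face \<longleftrightarrow> finite K \<and>
     (\<forall>s\<in>K. 0 < dim s \<longrightarrow> (\<forall>i\<le>dim s. face s i \<in> K \<and> dim (face s i) = dim s - 1)) \<and>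
     (\<forall>s\<in>K. 2 \<le> dim s \<longrightarrow> (\<forall>i j. i < j \<and> j \<le> dim s \<longrightarrow>
         face (face s j) i = face (face s i) (j - 1)))"

definition face_rel :: "'a set \<Rightarrow> ('a \<Rightarrow> nat) \<Rightarrow> ('a \<Rightarrow> nat \<Rightarrow> 'a) \<Rightarrow> ('a \<times> 'a) set" where
  "face_rel K dim face = {(face t i, t) | t i. t \<in> K \<and> 0 < dim t \<and> i \<le> dim t}"

definition proper_face :: "'a set \<Rightarrow> ('a \<Rightarrow> nat) \<Rightarrow> ('a \<Rightarrow> nat \<Rightarrow> 'a) \<Rightarrow> 'a \<Rightarrow> 'a \<Rightarrow> bool" where
  "proper_face K dim face s t \<longleftrightarrow> (s, t) \<in> (face_rel K dim face)\<^sup>+"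

text \<open>Simplices of the cone omega * K: base simplices, the apex omega, cone simplices.\<close>
datatype 'a cone_simplex = Base 'a | Apex | Cone 'a

definition cone_cx :: "'a set \<Rightarrow> 'a cone_simplex set" where
  "cone_cx K = Base ` K \<union> {Apex} \<union> Cone ` K"

text \<open>Position key of the cone filtration: base simplices by increasing min,
  then omega, then cone simplices by decreasing max (lexicographic order).\<close>
fun filt_key :: "('a \<Rightarrow> int) \<Rightarrow> ('a \<Rightarrow> int) \<Rightarrow> 'a cone_simplex \<Rightarrow> int \<times> int" where
  "filt_key mn mx (Base s) = (0, mn s)"
| "filt_key mn mx Apex = (1, 0)"
| "filt_key mn mx (Cone s) = (2, - mx s)"

definition bd_coeff :: "('a \<Rightarrow> nat) \<Rightarrow> ('a \<Rightarrow> nat \<Rightarrow> 'a) \<Rightarrow> 'a \<Rightarrow> 'a \<Rightarrow> 'f::field" where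
  "bd_coeff dim face s r =
     (if dim s = 0 then 0 else (\<Sum>i\<in>{..dim s}. if face s i = r then (-1) ^ i else 0))"

text \<open>Boundary matrix D of omega * K: entry (row x, column y) is the coefficient of x
  in the boundary of y; with boundary of omega * s = s - omega * (boundary s), and
  boundary of omega * v = v - omega for a vertex v.\<close>
fun cone_bd :: "('a \<Rightarrow> nat) \<Rightarrow> ('a \<Rightarrow> nat \<Rightarrow> 'a) \<Rightarrow> 'a cone_simplex \<Rightarrow> 'a cone_simplex \<Rightarrow> 'f::field" where
  "cone_bd dim face (Base r) (Base s) = bd_coeff dim face s r"
| "cone_bd dim face (Cone r) (Cone s) = - bd_coeff dim face s r"
| "cone_bd dim face (Base r) (Cone s) = (if r = s then 1 else 0)"
| "cone_bd dim face Apex (Cone s) = (if dim s = 0 then -1 else 0)"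
| "cone_bd dim face _ _ = 0"

definition is_low :: "('a \<Rightarrow> int) \<Rightarrow> ('a \<Rightarrow> int) \<Rightarrow> 'a set \<Rightarrow> ('a cone_simplex \<Rightarrow> 'f::zero) \<Rightarrow> 'a cone_simplex \<Rightarrow> bool" where
  "is_low mn mx K col x \<longleftrightarrow> x \<in> cone_cx K \<and> col x \<noteq> 0 \<and>
     (\<forall>y\<in>cone_cx K. col y \<noteq> 0 \<longrightarrow> filt_key mn mx y \<le> filt_key mn mx x)"

end

theory Submission
  imports Defs
begin

lemma dc_fin: "delta_complex K dim face \<Longrightarrow> finite K"
  unfolding delta_complex_def by (elim conjE)

lemma dc_face: "delta_complex K dim face \<Longrightarrow> s \<in> K \<Longrightarrow> 0 < dim s \<Longrightarrow> i \<le> dim s \<Longrightarrow>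
   face s i \<in> K \<and> dim (face s i) = dim s - 1"
  unfolding delta_complex_def by (elim conjE) (drule bspec, assumption, drule mp, assumption, blast)

lemma dc_id: "delta_complex K dim face \<Longrightarrow> s \<in> K \<Longrightarrow> 2 \<le> dim s \<Longrightarrow> i < j \<Longrightarrow> j \<le> dim s \<Longrightarrow>
   face (face s j) i = face (face s i) (j - 1)"
  unfolding delta_complex_def by (elim conjE) (drule bspec[where x=s], assumption, drule mp, assumption, blast)

lemma sum_cone:
  assumes "finite K"
  shows "(\<Sum>u\<in>cone_cx K. f u) = (\<Sum>s\<in>K. f (Base s)) + f Apex + (\<Sum>s\<in>K. f (Cone s))"
proof -
  have e: "cone_cx K = (Base ` K \<union> {Apex}) \<union> Cone ` K" unfolding cone_cx_def by auto
  have 1: "(\<Sum>u\<in>(Base ` K \<union> {Apex}) \<union> Cone ` K. f u) = (\<Sum>u\<in>Base ` K \<union> {Apex}. f u) + (\<Sum>u\<in>Cone ` K. f u)"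
    by (rule sum.union_disjoint) (use assms in auto)
  have 2: "(\<Sum>u\<in>Base ` K \<union> {Apex}. f u) = (\<Sum>u\<in>Base ` K. f u) + (\<Sum>u\<in>{Apex}. f u)"
    by (rule sum.union_disjoint) (use assms in auto)
  have 3: "(\<Sum>u\<in>Base ` K. f u) = (\<Sum>s\<in>K. f (Base s))"
    by (rule sum.reindex_cong[where l=Base]) (auto simp: inj_on_def)
  have 4: "(\<Sum>u\<in>Cone ` K. f u) = (\<Sum>s\<in>K. f (Cone s))"
    by (rule sum.reindex_cong[where l=Cone]) (auto simp: inj_on_def)
  show ?thesis unfolding e 1 2 3 4 by simp
qed

lemma bd_nz:
  assumes cx: "delta_complex K dim face" and s: "s \<in> K"
    and nz: "(bd_coeff dim face s r :: 'f::field) \<noteq> 0"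
  shows "0 < dim s \<and> (\<exists>i\<le>dim s. face s i = r) \<and> r \<in> K"
proof -
  have d: "dim s \<noteq> 0"
  proof
    assume "dim s = 0" then have "(bd_coeff dim face s r :: 'f) = 0" unfolding bd_coeff_def by simp
    with nz show False by simp
  qed
  have "(\<Sum>i\<in>{..dim s}. if face s i = r then (-1) ^ i else 0) \<noteq> (0::'f)"
    using nz d unfolding bd_coeff_def by simp
  have ex: "\<exists>i\<in>{..dim s}. (if face s i = r then (-1) ^ i else 0) \<noteq> (0::'f)"
  proof (rule ccontr)
    assume "\<not> ?thesis"
    then have "\<forall>i\<in>{..dim s}. (if face s i = r then (-1) ^ i else 0) = (0::'f)" by blast
    then have "(\<Sum>i\<in>{..dim s}. if face s i = r then (-1) ^ i else 0) = (0::'f)" by (rule sum.neutral)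
    with \<open>(\<Sum>i\<in>{..dim s}. if face s i = r then (-1) ^ i else 0) \<noteq> (0::'f)\<close> show False by contradiction
  qed
  then obtain i where "i \<le> dim s" "(if face s i = r then (-1) ^ i else 0) \<noteq> (0::'f)"
    by blast
  then have "i \<le> dim s" "face s i = r" by (cases "face s i = r"; simp)+
  moreover have "face s i \<in> K" using dc_face[OF cx s _ \<open>i \<le> dim s\<close>] d by auto
  ultimately show ?thesis using d by auto
qed

lemma bd_proper:
  assumes cx: "delta_complex K dim face" and s: "s \<in> K"
    and nz: "(bd_coeff dim face s r :: 'f::field) \<noteq> 0"
  shows "proper_face K dim face r s"
proof -
  obtain i where "0 < dim s" "i \<le> dim s" "face s i = r" using bd_nz[OF cx s nz] by auto
  then have "(r, s) \<in> face_rel K dim face" unfolding face_rel_def using s by blast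
  then show ?thesis unfolding proper_face_def by auto
qed

lemma sum_bd:
  assumes cx: "delta_complex K dim face" and s: "s \<in> K" and d: "0 < dim s"
  shows "(\<Sum>r\<in>K. g r * (bd_coeff dim face s r :: 'f::field)) = (\<Sum>i\<le>dim s. (-1)^i * g (face s i))"
proof -
  have fin: "finite K" using dc_fin[OF cx] .
  have fK: "\<And>i. i \<le> dim s \<Longrightarrow> face s i \<in> K" using dc_face[OF cx s d] by blast
  have "(\<Sum>r\<in>K. g r * (bd_coeff dim face s r :: 'f)) =
        (\<Sum>r\<in>K. \<Sum>i\<le>dim s. (if face s i = r then g r * (-1)^i else 0))"
    using d unfolding bd_coeff_def by (simp add: sum_distrib_left if_distrib cong: if_cong)
  also have "\<dots> = (\<Sum>i\<le>dim s. \<Sum>r\<in>K. (if face s i = r then g r * (-1)^i else 0))"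
    by (rule sum.swap)
  also have "\<dots> = (\<Sum>i\<le>dim s. (-1)^i * g (face s i))"
    using fin fK by (intro sum.cong) (auto simp: mult.commute)
  finally show ?thesis .
qed

lemma cancel:
  fixes F :: "nat \<Rightarrow> nat \<Rightarrow> 'b"
  assumes n: "1 \<le> n" and id: "\<And>i j. i < j \<Longrightarrow> j \<le> n \<Longrightarrow> F j i = F i (j - 1)"
  shows "(\<Sum>i\<le>n. (-1)^i * (\<Sum>j\<le>n-1. if F i j = q then (-1)^j else 0)) = (0::'f::comm_ring_1)"
proof -
  define t where "t = (\<lambda>(i,j). (-1)^i * (if F i j = q then (-1)^j else (0::'f)))"
  define P where "P = {(i,j). i \<le> n \<and> j \<le> n - 1 \<and> j < i}"
  define Q where "Q = {(i,j). i \<le> n \<and> j \<le> n - 1 \<and> i \<le> j}"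
  have "(\<Sum>i\<le>n. (-1)^i * (\<Sum>j\<le>n-1. if F i j = q then (-1)^j else 0)) = (\<Sum>i\<le>n. \<Sum>j\<le>n-1. t (i,j))"
    unfolding t_def by (simp add: sum_distrib_left)
  also have "\<dots> = sum t ({..n} \<times> {..n-1})" by (simp add: sum.cartesian_product)
  also have "{..n} \<times> {..n-1} = P \<union> Q" unfolding P_def Q_def by auto
  also have "sum t (P \<union> Q) = sum t P + sum t Q"
    by (rule sum.union_disjoint) (auto simp: P_def Q_def intro: finite_subset[of _ "{..n} \<times> {..n}"])
  also have "sum t P = sum (\<lambda>x. - t x) Q"
  proof (rule sum.reindex_bij_witness[where i = "\<lambda>(i,j). (j+1, i)" and j = "\<lambda>(i,j). (j, i - 1)"])
    show "\<And>a. a \<in> P \<Longrightarrow> (case case a of (i, j) \<Rightarrow> (j, i - 1) of (i, j) \<Rightarrow> (j + 1, i)) = a"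
      unfolding P_def by auto
    show "\<And>a. a \<in> P \<Longrightarrow> (case a of (i, j) \<Rightarrow> (j, i - 1)) \<in> Q" unfolding P_def Q_def by auto
    show "\<And>b. b \<in> Q \<Longrightarrow> (case case b of (i, j) \<Rightarrow> (j + 1, i) of (i, j) \<Rightarrow> (j, i - 1)) = b"
      unfolding Q_def by auto
    show "\<And>b. b \<in> Q \<Longrightarrow> (case b of (i, j) \<Rightarrow> (j + 1, i)) \<in> P" unfolding P_def Q_def using n by auto
    fix a assume a: "a \<in> P"
    then obtain i j where ij: "a = (i,j)" "i \<le> n" "j < i" unfolding P_def by auto
    then have e: "F i j = F j (i - 1)" using id by auto
    have "i = Suc (i - 1)" using ij by auto
    then have "(-1::'f)^i = - ((-1)^(i-1))" by (metis power_Suc mult_minus1)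
    then show "- t (case a of (i, j) \<Rightarrow> (j, i - 1)) = t a"
      unfolding t_def using ij e by (auto simp: algebra_simps)
  qed
  also have "sum (\<lambda>x. - t x) Q + sum t Q = 0" by (simp add: sum_negf)
  finally show ?thesis .
qed

lemma bd_dim0: "dim s = 0 \<Longrightarrow> (bd_coeff dim face s r :: 'f::field) = 0"
  unfolding bd_coeff_def by simp

lemma BB:
  assumes cx: "delta_complex K dim face" and s: "s \<in> K"
  shows "(\<Sum>r\<in>K. (bd_coeff dim face r q :: 'f::field) * bd_coeff dim face s r) = 0"
proof (cases "dim s = 0")
  case True then show ?thesis by (simp add: bd_dim0)
next
  case False
  then have d: "0 < dim s" by simp
  have fK: "\<And>i. i \<le> dim s \<Longrightarrow> face s i \<in> K \<and> dim (face s i) = dim s - 1" using dc_face[OF cx s d] by blast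
  have e: "(\<Sum>r\<in>K. (bd_coeff dim face r q :: 'f) * bd_coeff dim face s r) =
        (\<Sum>i\<le>dim s. (-1)^i * bd_coeff dim face (face s i) q)"
    by (rule sum_bd[OF cx s d])
  show ?thesis
  proof (cases "dim s = 1")
    case True
    then show ?thesis unfolding e using fK by (simp add: bd_dim0)
  next
    case False
    then have d2: "2 \<le> dim s" using d by simp
    have "(\<Sum>i\<le>dim s. (-1)^i * (bd_coeff dim face (face s i) q :: 'f)) =
          (\<Sum>i\<le>dim s. (-1)^i * (\<Sum>j\<le>dim s - 1. if face (face s i) j = q then (-1)^j else 0))"
    proof (rule sum.cong)
      fix i assume "i \<in> {..dim s}"
      then have "dim (face s i) = dim s - 1" using fK by auto
      then show "(-1)^i * (bd_coeff dim face (face s i) q :: 'f) =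
          (-1)^i * (\<Sum>j\<le>dim s - 1. if face (face s i) j = q then (-1)^j else 0)"
        using d2 unfolding bd_coeff_def by simp
    qed simp
    also have "\<dots> = 0"
      by (rule cancel) (use d2 dc_id[OF cx s d2] in auto)
    finally show ?thesis unfolding e .
  qed
qed

lemma aug:
  assumes cx: "delta_complex K dim face" and s: "s \<in> K"
  shows "(\<Sum>r\<in>K. (if dim r = 0 then 1 else 0) * (bd_coeff dim face s r :: 'f::field)) = 0"
proof (cases "dim s = 0")
  case True then show ?thesis by (simp add: bd_dim0)
next
  case False
  then have d: "0 < dim s" by simp
  have fK: "\<And>i. i \<le> dim s \<Longrightarrow> face s i \<in> K \<and> dim (face s i) = dim s - 1" using dc_face[OF cx s d] by blast
  have e: "(\<Sum>r\<in>K. (if dim r = 0 then 1 else 0) * (bd_coeff dim face s r :: 'f)) =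
        (\<Sum>i\<le>dim s. (-1)^i * (if dim (face s i) = 0 then 1 else 0))"
    by (rule sum_bd[OF cx s d])
  show ?thesis
  proof (cases "dim s = 1")
    case True
    then have "{..dim s} = {0, 1}" by auto
    then show ?thesis unfolding e using fK True by simp
  next
    case False
    then show ?thesis unfolding e using fK d by simp
  qed
qed

lemma DD:
  assumes cx: "delta_complex K dim face" and v: "v \<in> cone_cx K"
  shows "(\<Sum>u\<in>cone_cx K. cone_bd dim face x u * (cone_bd dim face u v :: 'f::field)) = 0"
proof -
  have fin: "finite K" by (rule dc_fin[OF cx])
  note sc = sum_cone[OF fin, of "\<lambda>u. cone_bd dim face x u * (cone_bd dim face u v :: 'f)"]
  show ?thesis
  proof (cases v)
    case Apex
    then show ?thesis unfolding sc by simp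
  next
    case (Base s)
    then have s: "s \<in> K" using v unfolding cone_cx_def by auto
    show ?thesis
    proof (cases x)
      case (Base q)
      then show ?thesis unfolding sc using BB[OF cx s, of q] \<open>v = Base s\<close> by simp
    next
      case Apex
      then show ?thesis unfolding sc using \<open>v = Base s\<close> by simp
    next
      case (Cone q)
      then show ?thesis unfolding sc using \<open>v = Base s\<close> by simp
    qed
  next
    case (Cone s)
    then have s: "s \<in> K" using v unfolding cone_cx_def by auto
    show ?thesis
    proof (cases x)
      case (Base q)
      have 1: "(\<Sum>r\<in>K. (bd_coeff dim face r q :: 'f) * (if r = s then 1 else 0)) = bd_coeff dim face s q"
        using fin s by (simp add: if_distrib cong: if_cong)
      have 2: "(\<Sum>r\<in>K. (if q = r then 1 else 0) * - (bd_coeff dim face s r :: 'f)) = - bd_coeff dim face s q"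
      proof (cases "q \<in> K")
        case True
        have "(\<Sum>r\<in>K. (if q = r then 1 else 0) * - (bd_coeff dim face s r :: 'f)) =
              (\<Sum>r\<in>K. if q = r then - (bd_coeff dim face s r :: 'f) else 0)"
          by (rule sum.cong) auto
        then show ?thesis using fin True by simp
      next
        case False
        then have "(bd_coeff dim face s q :: 'f) = 0" using bd_nz[OF cx s] by blast
        moreover have "(\<Sum>r\<in>K. (if q = r then 1 else 0) * - (bd_coeff dim face s r :: 'f)) = 0"
          by (rule sum.neutral) (use False in auto)
        ultimately show ?thesis by simp
      qed
      show ?thesis unfolding sc using 1 2 \<open>v = Cone s\<close> Base by simp
    next
      case Apex
      have "(\<Sum>r\<in>K. (if dim r = 0 then -1 else 0) * - (bd_coeff dim face s r :: 'f)) =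
            (\<Sum>r\<in>K. (if dim r = 0 then 1 else 0) * (bd_coeff dim face s r :: 'f))"
        by (rule sum.cong) auto
      then show ?thesis unfolding sc using aug[OF cx s] \<open>v = Cone s\<close> Apex by simp
    next
      case (Cone q)
      have "(\<Sum>r\<in>K. - (bd_coeff dim face r q :: 'f) * - (bd_coeff dim face s r)) =
            (\<Sum>r\<in>K. (bd_coeff dim face r q :: 'f) * (bd_coeff dim face s r))"
        by simp
      then show ?thesis unfolding sc using BB[OF cx s, of q] \<open>v = Cone s\<close> Cone by simp
    qed
  qed
qed

lemma tri_diag:
  fixes key :: "'b \<Rightarrow> 'k::linorder" and V W :: "'b \<Rightarrow> 'b \<Rightarrow> 'f::field"
  assumes fin: "finite S" and inj: "inj_on key S"
    and up: "\<forall>x\<in>S. \<forall>y\<in>S. V x y \<noteq> 0 \<longrightarrow> key x \<le> key y"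
    and inv: "\<forall>x\<in>S. \<forall>y\<in>S. (\<Sum>u\<in>S. V x u * W u y) = (if x = y then 1 else 0)"
    and x: "x \<in> S"
  shows "V x x \<noteq> 0"
proof -
  define m where "m x = card {u\<in>S. key x < key u}" for x
  have main: "x \<in> S \<longrightarrow> V x x * W x x = 1 \<and> (\<forall>y\<in>S. key y < key x \<longrightarrow> W x y = 0)" for x
  proof (induction x rule: measure_induct_rule[where f = m])
    case (less x)
    show ?case
    proof
      assume xS: "x \<in> S"
      have IH: "\<And>u y. u \<in> S \<Longrightarrow> key x < key u \<Longrightarrow> y \<in> S \<Longrightarrow> key y < key u \<Longrightarrow> W u y = 0"
      proof -
        fix u y assume u: "u \<in> S" "key x < key u" "y \<in> S" "key y < key u"
        have "{v\<in>S. key u < key v} \<subset> {v\<in>S. key x < key v}" using u by auto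
        then have "m u < m x" unfolding m_def by (rule psubset_card_mono[rotated]) (use fin in auto)
        then show "W u y = 0" using less u by blast
      qed
      have red: "(\<Sum>u\<in>S. V x u * W u y) = V x x * W x y" if y: "y \<in> S" "key y \<le> key x" for y
      proof -
        have "(\<Sum>u\<in>S. V x u * W u y) = V x x * W x y + (\<Sum>u\<in>S - {x}. V x u * W u y)"
          using fin xS by (simp add: sum.remove)
        also have "(\<Sum>u\<in>S - {x}. V x u * W u y) = 0"
        proof (rule sum.neutral, rule ballI)
          fix u assume u: "u \<in> S - {x}"
          show "V x u * W u y = 0"
          proof (cases "V x u = 0")
            case False
            then have "key x \<le> key u" using up xS u by auto
            moreover have "key x \<noteq> key u" using inj xS u unfolding inj_on_def by auto
            ultimately have "key x < key u" by simp
            then have "W u y = 0" using IH u y by auto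
            then show ?thesis by simp
          qed simp
        qed
        finally show ?thesis by simp
      qed
      have 1: "V x x * W x x = 1" using red[of x] inv xS by auto
      have 2: "W x y = 0" if "y \<in> S" "key y < key x" for y
      proof -
        have "y \<noteq> x" using that by auto
        then have "V x x * W x y = 0" using red[of y] inv xS that by auto
        moreover have "V x x \<noteq> 0" using 1 by auto
        ultimately show ?thesis by simp
      qed
      show "V x x * W x x = 1 \<and> (\<forall>y\<in>S. key y < key x \<longrightarrow> W x y = 0)" using 1 2 by auto
    qed
  qed
  then show ?thesis using x by (metis mult_zero_left zero_neq_one)
qed

theorem claim6p3:
  fixes K :: "'a set" and dim :: "'a \<Rightarrow> nat" and face :: "'a \<Rightarrow> nat \<Rightarrow> 'a"
    and mn mx :: "'a \<Rightarrow> int"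
    and D R V :: "'a cone_simplex \<Rightarrow> 'a cone_simplex \<Rightarrow> 'f::field"
    and \<sigma> \<tau> :: 'a
  assumes cx: "delta_complex K dim face"
    and interval: "\<forall>s\<in>K. mn s < mx s"
    and nested: "\<forall>s\<in>K. \<forall>t\<in>K. proper_face K dim face s t \<longrightarrow>
                   mn s < mn t \<and> mn t < mx t \<and> mx t < mx s"
    and mn_inj: "inj_on mn K" and mx_inj: "inj_on mx K"
    and D_def: "D = cone_bd dim face"
    and V_upper: "\<forall>x\<in>cone_cx K. \<forall>y\<in>cone_cx K. V x y \<noteq> 0 \<longrightarrow> filt_key mn mx x \<le> filt_key mn mx y"
    and V_inv: "\<exists>W. \<forall>x\<in>cone_cx K. \<forall>y\<in>cone_cx K.
                  (\<Sum>u\<in>cone_cx K. V x u * W u y) = (if x = y then 1 else 0) \<and>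
                  (\<Sum>u\<in>cone_cx K. W x u * V u y) = (if x = y then 1 else 0)"
    and R_DV: "\<forall>x\<in>cone_cx K. \<forall>y\<in>cone_cx K. R x y = (\<Sum>u\<in>cone_cx K. D x u * V u y)"
    and R_reduced: "\<forall>y1\<in>cone_cx K. \<forall>y2\<in>cone_cx K. \<forall>x. y1 \<noteq> y2 \<longrightarrow>
                      \<not> (is_low mn mx K (\<lambda>r. R r y1) x \<and> is_low mn mx K (\<lambda>r. R r y2) x)"
    and \<sigma>K: "\<sigma> \<in> K" and \<tau>K: "\<tau> \<in> K"
    and pair: "is_low mn mx K (\<lambda>r. R r (Cone \<tau>)) (Base \<sigma>)"
    and db: "mn \<sigma> > mx \<tau>"
  shows "let b = mx \<tau>; d = mn \<sigma>;
             c = (\<lambda>x. if x \<in> cone_cx K \<and> (case x of Base s \<Rightarrow> b \<le> mx s | _ \<Rightarrow> True)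
                      then V x (Cone \<tau>) else 0);
             z = (\<lambda>x. \<Sum>u\<in>cone_cx K. D x u * c u)
         in (\<forall>x. (\<Sum>u\<in>cone_cx K. D x u * z u) = 0)
            \<and> (\<forall>x. z x \<noteq> 0 \<longrightarrow> x \<in> Base ` {s\<in>K. b \<le> mx s \<and> mn s \<le> d})
            \<and> z (Base \<sigma>) \<noteq> 0 \<and> z (Base \<tau>) \<noteq> 0"
  proof -
  let ?C = "cone_cx K"
  let ?k = "filt_key mn mx"
  define c where "c = (\<lambda>x. if x \<in> cone_cx K \<and> (case x of Base s \<Rightarrow> mx \<tau> \<le> mx s | _ \<Rightarrow> True)
                      then V x (Cone \<tau>) else 0)"
  define z where "z = (\<lambda>x. \<Sum>u\<in>cone_cx K. D x u * c u)"
  have fin: "finite K" by (rule dc_fin[OF cx])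
  have finC: "finite ?C" unfolding cone_cx_def using fin by simp
  have CtC: "Cone \<tau> \<in> ?C" unfolding cone_cx_def using \<tau>K by simp
  have BsC: "Base \<sigma> \<in> ?C" unfolding cone_cx_def using \<sigma>K by simp
  have BC: "Base s \<in> ?C \<longleftrightarrow> s \<in> K" for s unfolding cone_cx_def by auto
  have CC: "Cone s \<in> ?C \<longleftrightarrow> s \<in> K" for s unfolding cone_cx_def by auto
  have AC: "Apex \<in> ?C" unfolding cone_cx_def by auto
  have Rlow: "\<And>y. y \<in> ?C \<Longrightarrow> R y (Cone \<tau>) \<noteq> 0 \<Longrightarrow> ?k y \<le> (0, mn \<sigma>)"
    using pair unfolding is_low_def by auto
  have Rs: "R (Base \<sigma>) (Cone \<tau>) \<noteq> 0" using pair unfolding is_low_def by auto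
  have cdiff: "\<exists>s\<in>K. u = Base s \<and> mx s < mx \<tau>" if "u \<in> ?C" "c u \<noteq> V u (Cone \<tau>)" for u
    using that unfolding c_def cone_cx_def by (auto split: cone_simplex.splits if_splits)
  have zR: "\<exists>u\<in>?C. D x u \<noteq> 0 \<and> c u \<noteq> V u (Cone \<tau>)" if "x \<in> ?C" "z x \<noteq> R x (Cone \<tau>)" for x
  proof (rule ccontr)
    assume "\<not> ?thesis"
    then have eq: "\<forall>u\<in>?C. D x u * c u = D x u * V u (Cone \<tau>)" by auto
    have "z x = (\<Sum>u\<in>?C. D x u * V u (Cone \<tau>))" unfolding z_def by (rule sum.cong[OF refl]) (use eq in blast)
    also have "\<dots> = R x (Cone \<tau>)" using R_DV that(1) CtC by auto
    finally show False using that(2) by contradiction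
  qed
  have znz: "\<exists>u\<in>?C. D x u \<noteq> 0 \<and> c u \<noteq> 0" if "z x \<noteq> 0" for x
  proof (rule ccontr)
    assume "\<not> ?thesis"
    then have "\<forall>u\<in>?C. D x u * c u = 0" by auto
    then have "z x = 0" unfolding z_def by (rule sum.neutral)
    then show False using that by contradiction
  qed
  have nonbase: "z x = 0" if xC: "x \<in> ?C" and nb: "\<And>r. x \<noteq> Base r" for x
  proof -
    have "z x = R x (Cone \<tau>)"
    proof (rule ccontr)
      assume "z x \<noteq> R x (Cone \<tau>)"
      then obtain u where u: "u \<in> ?C" "D x u \<noteq> 0" "c u \<noteq> V u (Cone \<tau>)" using zR xC by blast
      then obtain s where "u = Base s" using cdiff by blast
      then show False using u(2) nb D_def by (cases x) auto
    qed
    moreover have "R x (Cone \<tau>) = 0"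
    proof (rule ccontr)
      assume "R x (Cone \<tau>) \<noteq> 0"
      then have "?k x \<le> (0, mn \<sigma>)" using Rlow xC by blast
      then show False using nb by (cases x) auto
    qed
    ultimately show ?thesis by simp
  qed
  have keyinj: "inj_on ?k ?C"
  proof (rule inj_onI)
    fix x y assume "x \<in> ?C" "y \<in> ?C" "?k x = ?k y"
    then show "x = y" unfolding cone_cx_def
      using inj_onD[OF mn_inj] inj_onD[OF mx_inj] by auto
  qed
  have c1: "\<forall>x. (\<Sum>u\<in>?C. D x u * z u) = 0"
  proof
    fix x
    have "(\<Sum>u\<in>?C. D x u * z u) = (\<Sum>u\<in>?C. \<Sum>v\<in>?C. D x u * (D u v * c v))"
      unfolding z_def by (simp add: sum_distrib_left)
    also have "\<dots> = (\<Sum>v\<in>?C. \<Sum>u\<in>?C. D x u * (D u v * c v))" by (rule sum.swap)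
    also have "\<dots> = (\<Sum>v\<in>?C. (\<Sum>u\<in>?C. D x u * D u v) * c v)"
      by (simp add: sum_distrib_right mult.assoc)
    also have "\<dots> = 0" by (rule sum.neutral) (use DD[OF cx] D_def in auto)
    finally show "(\<Sum>u\<in>?C. D x u * z u) = 0" .
  qed
  have c2: "\<forall>x. z x \<noteq> 0 \<longrightarrow> x \<in> Base ` {s\<in>K. mx \<tau> \<le> mx s \<and> mn s \<le> mn \<sigma>}"
  proof (intro allI impI)
    fix x assume zx: "z x \<noteq> 0"
    obtain u where u: "u \<in> ?C" "D x u \<noteq> 0" "c u \<noteq> 0" using znz[OF zx] by blast
    have "\<exists>r. x = Base r \<and> r \<in> K \<and> mx \<tau> \<le> mx r"
    proof (cases u)
      case Apex
      then show ?thesis using u(2) D_def by (cases x) auto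
    next
      case (Base s)
      then have sK: "s \<in> K" using u(1) BC by auto
      obtain r where x: "x = Base r" and bd: "(bd_coeff dim face s r :: 'f) \<noteq> 0"
        using u(2) Base D_def by (cases x) auto
      have rK: "r \<in> K" using bd_nz[OF cx sK bd] by blast
      have "mx s < mx r" using nested sK rK bd_proper[OF cx sK bd] by blast
      moreover have "mx \<tau> \<le> mx s" using u(3) Base unfolding c_def by (auto split: if_splits)
      ultimately show ?thesis using x rK by auto
    next
      case (Cone s)
      then have sK: "s \<in> K" using u(1) CC by auto
      have "V (Cone s) (Cone \<tau>) \<noteq> 0" using u(3) Cone unfolding c_def by (auto split: if_splits)
      then have "?k (Cone s) \<le> ?k (Cone \<tau>)" using V_upper u(1) Cone CtC by blast
      then have le: "mx \<tau> \<le> mx s" by simp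
      show ?thesis
      proof (cases x)
        case (Base r)
        then show ?thesis using u(2) Cone D_def sK le by (auto split: if_splits)
      next
        case Apex
        then show ?thesis using nonbase[OF AC] zx by auto
      next
        case (Cone r)
        then have bd: "(bd_coeff dim face s r :: 'f) \<noteq> 0" using u(2) \<open>u = Cone s\<close> D_def by auto
        have "r \<in> K" using bd_nz[OF cx sK bd] by blast
        then show ?thesis using nonbase[of x] Cone CC zx by auto
      qed
    qed
    then obtain r where x: "x = Base r" and rK: "r \<in> K" and mr: "mx \<tau> \<le> mx r" by blast
    have "mn r \<le> mn \<sigma>"
    proof (cases "z x = R x (Cone \<tau>)")
      case True
      have xC: "Base r \<in> ?C" using rK BC by blast
      have "R (Base r) (Cone \<tau>) \<noteq> 0" using True zx x by simp
      then have "?k (Base r) \<le> (0, mn \<sigma>)" using Rlow xC by blast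
      then show ?thesis by simp
    next
      case False
      then obtain u' where u': "u' \<in> ?C" "D x u' \<noteq> 0" "c u' \<noteq> V u' (Cone \<tau>)"
        using zR x rK BC by blast
      then obtain s where s: "s \<in> K" "u' = Base s" "mx s < mx \<tau>" using cdiff by blast
      then have bd: "(bd_coeff dim face s r :: 'f) \<noteq> 0" using u'(2) x D_def by auto
      have "mn r < mn s" using nested s(1) rK bd_proper[OF cx s(1) bd] by blast
      moreover have "mn s < mx s" using interval s(1) by blast
      ultimately show ?thesis using s(3) db by simp
    qed
    then show "x \<in> Base ` {s\<in>K. mx \<tau> \<le> mx s \<and> mn s \<le> mn \<sigma>}" using x rK mr by auto
  qed
  have c3: "z (Base \<sigma>) \<noteq> 0"
  proof -
    have "z (Base \<sigma>) = R (Base \<sigma>) (Cone \<tau>)"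
    proof (rule ccontr)
      assume "z (Base \<sigma>) \<noteq> R (Base \<sigma>) (Cone \<tau>)"
      then obtain u' where u': "u' \<in> ?C" "D (Base \<sigma>) u' \<noteq> 0" "c u' \<noteq> V u' (Cone \<tau>)"
        using zR BsC by blast
      then obtain s where s: "s \<in> K" "u' = Base s" "mx s < mx \<tau>" using cdiff by blast
      then have bd: "(bd_coeff dim face s \<sigma> :: 'f) \<noteq> 0" using u'(2) D_def by auto
      have "mn \<sigma> < mn s" using nested s(1) \<sigma>K bd_proper[OF cx s(1) bd] by blast
      moreover have "mn s < mx s" using interval s(1) by blast
      ultimately show False using s(3) db by simp
    qed
    then show ?thesis using Rs by simp
  qed
  have c4: "z (Base \<tau>) \<noteq> 0"
  proof -
    have "z (Base \<tau>) = D (Base \<tau>) (Cone \<tau>) * c (Cone \<tau>) + (\<Sum>u\<in>?C - {Cone \<tau>}. D (Base \<tau>) u * c u)"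
      unfolding z_def using finC CtC by (simp add: sum.remove)
    also have "(\<Sum>u\<in>?C - {Cone \<tau>}. D (Base \<tau>) u * c u) = 0"
    proof (rule sum.neutral, rule ballI)
      fix u assume u: "u \<in> ?C - {Cone \<tau>}"
      show "D (Base \<tau>) u * c u = 0"
      proof (cases u)
        case (Base s)
        then have sK: "s \<in> K" using u BC by auto
        show ?thesis
        proof (cases "(bd_coeff dim face s \<tau> :: 'f) = 0")
          case True then show ?thesis using Base D_def by simp
        next
          case False
          have "mx \<tau> > mx s" using nested sK \<tau>K bd_proper[OF cx sK False] by blast
          then have "c u = 0" using Base unfolding c_def by auto
          then show ?thesis by simp
        qed
      next
        case Apex then show ?thesis using D_def by simp
      next
        case (Cone s) then show ?thesis using D_def u by auto
      qed
    qed
    also have "D (Base \<tau>) (Cone \<tau>) * c (Cone \<tau>) = V (Cone \<tau>) (Cone \<tau>)"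
      using D_def CtC unfolding c_def by simp
    finally have zt: "z (Base \<tau>) = V (Cone \<tau>) (Cone \<tau>)" by simp
    obtain W where W: "\<forall>x\<in>?C. \<forall>y\<in>?C. (\<Sum>u\<in>?C. V x u * W u y) = (if x = y then 1 else 0)"
      using V_inv by blast
    have "V (Cone \<tau>) (Cone \<tau>) \<noteq> 0"
      by (rule tri_diag[OF finC keyinj V_upper W CtC])
    then show ?thesis using zt by simp
  qed
  have main: "(\<forall>x. (\<Sum>u\<in>?C. D x u * z u) = 0)
            \<and> (\<forall>x. z x \<noteq> 0 \<longrightarrow> x \<in> Base ` {s\<in>K. mx \<tau> \<le> mx s \<and> mn s \<le> mn \<sigma>})
            \<and> z (Base \<sigma>) \<noteq> 0 \<and> z (Base \<tau>) \<noteq> 0" using c1 c2 c3 c4 by blast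
  show ?thesis unfolding Let_def using main unfolding z_def c_def .
qed

end
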